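(* Let $N\in\mathbb{C}^{m\times n}$ have rank $r$ and singular value decomposition $N=U\begin{pmatrix}\Sigma & 0\\ 0 & 0\end{pmatrix}V^{\ast}$, where $\Sigma\in\mathbb{C}^{r\times r}$ is diagonal with positive diagonal entries and $U\in\mathbb{C}^{m\times m}$, $V\in\mathbb{C}^{n\times n}$ are unitary. Let $Y\in\mathbb{C}^{n\times n}$ be arbitrary. Suppose that one of the following conditions holds: (C1') $YN^{\ast}N$ is normal; (C2') there exist $0\neq c_{1}'\in\mathbb{C}$ and $k_{1}'\in\mathbb{N}^{+}$ such that $(YN^{\ast}N)^{k_{1}'}=c_{1}'N^{\dagger}N$; (C3') there exist $0\neq c_{2}'\in\mathbb{C}$, $\ell'\in\mathbb{N}^{+}$ and $k_{2}'\in\mathbb{N}^{+}$ such that $(YN^{\ast}N)^{k_{2}'}=c_{2}'(N^{\ast}N)^{\ell'}$; (C4') $F_{N}Y$ is normal; (C5') there exist $0\neq c_{3}'\in\mathbb{C}$ and $k_{3}'\in\mathbb{N}^{+}$ such that $(F_{N}Y)^{k_{3}'}=c_{3}'F_{N}$; (C6') $F_{N}YN^{\dagger}N=0$; (C7') there exists $k_{4}'\in\mathbb{N}^{+}$ such that $F_{N}Y(N^{\ast}N)^{k_{4}'}=0$. Then $Y=V\begin{pmatrix}Y_{1} & Y_{3}\\ 0 & Y_{4}\end{pmatrix}V^{\ast}$ for some $Y_{1}\in\mathbb{C}^{r\times r}$, $Y_{3}\in\mathbb{C}^{r\times(n-r)}$, $Y_{4}\in\mathbb{C}^{(n-r)\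times(n-r)}$.
   Context: $\mathbb{N}^{+}$ is the set of positive integers. For a complex matrix $A$, $A^{\ast}$ is its conjugate transpose, $A^{\dagger}$ its Moore--Penrose inverse, and $F_{A}:=I-A^{\dagger}A$. A square matrix $B$ is normal if $BB^{\ast}=B^{\ast}B$. *)

theory Defs
  imports "Jordan_Normal_Form.Schur_Decomposition" "Jordan_Normal_Form.DL_Rank"
begin

definition unitary_mat :: "complex mat \<Rightarrow> nat \<Rightarrow> bool" where
  "unitary_mat U k \<longleftrightarrow> U \<in> carrier_mat k k \<and>
     mat_adjoint U * U = 1\<^sub>m k \<and> U * mat_adjoint U = 1\<^sub>m k"

definition normal_mat :: "complex mat \<Rightarrow> bool" where
  "normal_mat B \<longleftrightarrow> B * mat_adjoint B = mat_adjoint B * B"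

definition penrose :: "complex mat \<Rightarrow> complex mat \<Rightarrow> bool" where
  "penrose A X \<longleftrightarrow> X \<in> carrier_mat (dim_col A) (dim_row A) \<and>
     A * X * A = A \<and> X * A * X = X \<and>
     mat_adjoint (A * X) = A * X \<and> mat_adjoint (X * A) = X * A"

text \<open>The Moore--Penrose inverse (exists and is unique).\<close>
definition mp_inv :: "complex mat \<Rightarrow> complex mat" where
  "mp_inv A = (THE X. penrose A X)"

definition F_mat :: "complex mat \<Rightarrow> complex mat" where
  "F_mat A = 1\<^sub>m (dim_col A) - mp_inv A * A"

end

theory Submission
  imports Defs
begin
lemma adj_dim[simp]: "dim_row (mat_adjoint A) = dim_col A" "dim_col (mat_adjoint A) = dim_row A"
  unfolding mat_adjoint_def by auto

lemma adj_index[simp]: "i < dim_col A \<Longrightarrow> j < dim_row A \<Longrightarrow> mat_adjoint A $$ (i,j) = conjugate (A $$ (j,i))"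
  unfolding mat_adjoint_def mat_of_rows_def 
  apply (subst index_mat)
  apply simp
  apply simp
  apply simp
  done

lemma adj_carrier[simp]: "A \<in> carrier_mat a b \<Longrightarrow> mat_adjoint A \<in> carrier_mat b a"
  unfolding carrier_mat_def by simp

lemma adj_adj[simp]: "mat_adjoint (mat_adjoint (A::complex mat)) = A"
  apply (rule eq_matI) 
  apply simp_all
  done

lemma adj_mult: assumes "(A::complex mat) \<in> carrier_mat a b" "B \<in> carrier_mat b c"
  shows "mat_adjoint (A * B) = mat_adjoint B * mat_adjoint A"
proof (rule eq_matI)
  fix i j assume ij: "i < dim_row (mat_adjoint B * mat_adjoint A)" "j < dim_col (mat_adjoint B * mat_adjoint A)"
  then have i: "i < c" and j: "j < a" using assms by auto
  have "mat_adjoint (A * B) $$ (i, j) = conjugate (row A j \<bullet> col B i)"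
    using assms i j by simp
  also have "\<dots> = (\<Sum>k<b. conjugate (A $$ (j,k)) * conjugate (B $$ (k,i)))"
    using assms i j by (simp add: scalar_prod_def sum_conjugate conjugate_dist_mul lessThan_atLeast0)
  also have "\<dots> = (mat_adjoint B * mat_adjoint A) $$ (i, j)"
    using assms i j by (simp add: scalar_prod_def mult.commute lessThan_atLeast0)
  finally show "mat_adjoint (A * B) $$ (i, j) = (mat_adjoint B * mat_adjoint A) $$ (i, j)" .
qed (use assms in auto)

lemma adj_zero[simp]: "mat_adjoint (0\<^sub>m a b :: complex mat) = 0\<^sub>m b a"
  apply (rule eq_matI) apply simp_all done

lemma adj_one[simp]: "mat_adjoint (1\<^sub>m a :: complex mat) = 1\<^sub>m a"
  apply (rule eq_matI) apply simp_all done

lemma adj_minus: assumes "(A::complex mat) \<in> carrier_mat a b" "B \<in> carrier_mat a b"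
  shows "mat_adjoint (A - B) = mat_adjoint A - mat_adjoint B"
  apply (rule eq_matI) using assms by (simp_all add: conjugate_dist_add conjugate_neg)

lemma adj_smult: "mat_adjoint (c \<cdot>\<^sub>m (A::complex mat)) = conjugate c \<cdot>\<^sub>m mat_adjoint A"
proof (rule eq_matI)
  fix i j assume ij: "i < dim_row (conjugate c \<cdot>\<^sub>m mat_adjoint A)" "j < dim_col (conjugate c \<cdot>\<^sub>m mat_adjoint A)"
  hence i: "i < dim_col A" and j: "j < dim_row A" by simp_all
  have "mat_adjoint (c \<cdot>\<^sub>m A) $$ (i, j) = conjugate ((c \<cdot>\<^sub>m A) $$ (j,i))"
    by (rule adj_index) (use i j in simp_all)
  also have "\<dots> = conjugate c * conjugate (A $$ (j,i))" using i j by (simp add: conjugate_dist_mul)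
  also have "\<dots> = (conjugate c \<cdot>\<^sub>m mat_adjoint A) $$ (i, j)" using i j by simp
  finally show "mat_adjoint (c \<cdot>\<^sub>m A) $$ (i, j) = (conjugate c \<cdot>\<^sub>m mat_adjoint A) $$ (i, j)" .
qed simp_all

lemma adj_four_block: assumes cA: "(A::complex mat) \<in> carrier_mat a1 b1" and cB: "B \<in> carrier_mat a1 b2"
   and cC: "C \<in> carrier_mat a2 b1" and cD: "D \<in> carrier_mat a2 b2"
 shows "mat_adjoint (four_block_mat A B C D) = four_block_mat (mat_adjoint A) (mat_adjoint C) (mat_adjoint B) (mat_adjoint D)"
proof -
  have d: "dim_row A = a1" "dim_col A = b1" "dim_row B = a1" "dim_col B = b2"
     "dim_row C = a2" "dim_col C = b1" "dim_row D = a2" "dim_col D = b2" 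
    using carrier_matD[OF cA] carrier_matD[OF cB] carrier_matD[OF cC] carrier_matD[OF cD] by simp_all
  show ?thesis
  proof (rule eq_matI)
  fix i j assume ij: "i < dim_row (four_block_mat (mat_adjoint A) (mat_adjoint C) (mat_adjoint B) (mat_adjoint D))"
     "j < dim_col (four_block_mat (mat_adjoint A) (mat_adjoint C) (mat_adjoint B) (mat_adjoint D))"
  hence i: "i < b1 + b2" and j: "j < a1 + a2" by (simp_all only: index_mat_four_block adj_dim d)
  have "mat_adjoint (four_block_mat A B C D) $$ (i, j) = conjugate (four_block_mat A B C D $$ (j,i))"
    by (rule adj_index) (use i j in \<open>simp_all only: index_mat_four_block d\<close>)
  also have "\<dots> = four_block_mat (mat_adjoint A) (mat_adjoint C) (mat_adjoint B) (mat_adjoint D) $$ (i, j)"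
  proof (cases "i < b1"; cases "j < a1")
    assume "i < b1" "j < a1" thus ?thesis using i j d by (simp only: index_mat_four_block adj_dim adj_index if_True, (simp)?)
  next
    assume "i < b1" "\<not> j < a1" thus ?thesis using i j d by (simp only: index_mat_four_block adj_dim adj_index if_True if_False, (simp)?)
  next
    assume "\<not> i < b1" "j < a1" thus ?thesis using i j d by (simp only: index_mat_four_block adj_dim adj_index if_True if_False, (simp)?)
  next
    assume "\<not> i < b1" "\<not> j < a1" thus ?thesis using i j d by (simp only: index_mat_four_block adj_dim adj_index if_True if_False, (simp)?)
  qed
  finally show "mat_adjoint (four_block_mat A B C D) $$ (i, j) = four_block_mat (mat_adjoint A) (mat_adjoint C) (mat_adjoint B) (mat_adjoint D) $$ (i, j)" .
  qed (simp_all only: index_mat_four_block adj_dim d)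
qed

lemma mult_adj_zero: assumes X: "(X::complex mat) \<in> carrier_mat a b" and XX: "X * mat_adjoint X = 0\<^sub>m a a"
  shows "X = 0\<^sub>m a b"
proof (rule eq_matI)
  fix i j assume ij: "i < dim_row (0\<^sub>m a b)" "j < dim_col (0\<^sub>m a b)"
  then have i: "i < a" and j: "j < b" by simp_all
  have r: "row X i \<in> carrier_vec b" using X i by simp
  have "(X * mat_adjoint X) $$ (i,i) = row X i \<bullet> col (mat_adjoint X) i"
    using X i by simp
  also have "col (mat_adjoint X) i = conjugate (row X i)"
    using X i by (intro eq_vecI) simp_all
  finally have "row X i \<bullet>c row X i = 0" using XX i by simp
  hence "row X i = 0\<^sub>v b" using r by simp
  hence "row X i $ j = 0" using j by simp
  thus "X $$ (i, j) = 0\<^sub>m a b $$ (i, j)" using X i j by simp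
qed (use X in simp_all)




lemma (in vec_space) rank_le_nr: assumes "A \<in> carrier_mat n nc" shows "rank A \<le> n"
proof -
  have "set (cols A) \<subseteq> carrier_vec n" using cols_dim[of A] assms by simp
  note sub = span_is_subspace[OF this]
  have "rank A \<le> dim" unfolding rank_def
    using subspace_dim[OF sub fin_dim fin_dim_span_cols[OF assms]] by simp
  thus ?thesis using dim_is_n by simp
qed

lemma penrose_unique:
  assumes A: "(A::complex mat) \<in> carrier_mat a b" and pX: "penrose A X" and pY: "penrose A Y"
  shows "X = Y"
proof -
  have X: "X \<in> carrier_mat b a" and Y: "Y \<in> carrier_mat b a" using pX pY A unfolding penrose_def by auto
  have X1: "A * X * A = A" and X2: "X * A * X = X" and X3: "mat_adjoint (A * X) = A * X"
    and X4: "mat_adjoint (X * A) = X * A" using pX unfolding penrose_def by auto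
  have Y1: "A * Y * A = A" and Y2: "Y * A * Y = Y" and Y3: "mat_adjoint (A * Y) = A * Y"
    and Y4: "mat_adjoint (Y * A) = Y * A" using pY unfolding penrose_def by auto
  have aA: "mat_adjoint A \<in> carrier_mat b a" using A by simp
  have aX: "mat_adjoint X \<in> carrier_mat a b" using X by simp
  have aY: "mat_adjoint Y \<in> carrier_mat a b" using Y by simp
  have AY: "A * Y \<in> carrier_mat a a" using A Y by (rule mult_carrier_mat)
  have XA: "X * A \<in> carrier_mat b b" using X A by (rule mult_carrier_mat)
  have e1: "X = X * (mat_adjoint X * mat_adjoint A)"
  proof -
    have "X = X * (A * X)" using X2 A X by simp
    also have "A * X = mat_adjoint (A * X)" using X3 by simp
    also have "\<dots> = mat_adjoint X * mat_adjoint A" using adj_mult[OF A X] .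
    finally show ?thesis .
  qed
  have e2: "mat_adjoint A = mat_adjoint A * (A * Y)"
  proof -
    have "mat_adjoint A = mat_adjoint ((A * Y) * A)" using Y1 by simp
    also have "\<dots> = mat_adjoint A * mat_adjoint (A * Y)" using adj_mult[of "A * Y" a a A b] A Y by simp
    finally show ?thesis using Y3 by simp
  qed
  have "X = X * (mat_adjoint X * (mat_adjoint A * (A * Y)))" using e1 e2 by simp
  also have "\<dots> = X * ((mat_adjoint X * mat_adjoint A) * (A * Y))" by (simp only: assoc_mult_mat[OF aX aA AY])
  also have "mat_adjoint X * mat_adjoint A = A * X" using adj_mult[OF A X] X3 by simp
  also have "X * ((A * X) * (A * Y)) = (X * A * X) * (A * Y)"
    using assoc_mult_mat[OF X A X] assoc_mult_mat[OF X mult_carrier_mat[OF A X] AY] by simp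
  also have "\<dots> = X * A * Y" using X2 X A Y by simp
  finally have ex: "X = X * A * Y" .
  have f1: "Y = mat_adjoint A * mat_adjoint Y * Y"
  proof -
    have "Y = (Y * A) * Y" using Y2 by simp
    also have "Y * A = mat_adjoint (Y * A)" using Y4 by simp
    also have "\<dots> = mat_adjoint A * mat_adjoint Y" using adj_mult[OF Y A] .
    finally show ?thesis .
  qed
  have f2: "mat_adjoint A = (X * A) * mat_adjoint A"
  proof -
    have "mat_adjoint A = mat_adjoint (A * (X * A))" using X1 A X by simp
    also have "\<dots> = mat_adjoint (X * A) * mat_adjoint A" using adj_mult[of A a b "X * A" b] A X by simp
    finally show ?thesis using X4 by simp
  qed
  have "Y = ((X * A) * mat_adjoint A) * mat_adjoint Y * Y" using f1 f2 by simp
  also have "\<dots> = (X * A) * (mat_adjoint A * mat_adjoint Y) * Y" by (simp only: assoc_mult_mat[OF XA aA aY])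
  also have "mat_adjoint A * mat_adjoint Y = Y * A" using adj_mult[OF Y A] Y4 by simp
  also have "(X * A) * (Y * A) * Y = X * A * (Y * A * Y)"
    by (rule assoc_mult_mat[OF XA mult_carrier_mat[OF Y A] Y])
  also have "\<dots> = X * A * Y" using Y2 by simp
  finally have ey: "Y = X * A * Y" .
  show ?thesis using ex ey by simp
qed

lemma pow_commute: assumes "(A::complex mat) \<in> carrier_mat n n" shows "A * A ^\<^sub>m k = A ^\<^sub>m k * A"
proof (induction k)
  case 0 thus ?case using assms by simp
next
  case (Suc k)
  have "A * A ^\<^sub>m Suc k = (A * A ^\<^sub>m k) * A" using assms
    by (simp add: assoc_mult_mat[OF assms pow_carrier_mat[OF assms] assms])
  also have "\<dots> = A ^\<^sub>m Suc k * A" using Suc assms by simp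
  finally show ?case .
qed

lemma mult_ctx: assumes "A * B = C" "(A::complex mat) \<in> carrier_mat a b" "B \<in> carrier_mat b c" "Z \<in> carrier_mat c d"
  shows "A * (B * Z) = C * Z"
  using assms by (metis assoc_mult_mat)



lemma smult_zero_cancel: assumes "(c::complex) \<noteq> 0" "c \<cdot>\<^sub>m A = 0\<^sub>m a b" "A \<in> carrier_mat a b"
  shows "A = 0\<^sub>m a b"
proof (rule eq_matI)
  fix i j assume ij: "i < dim_row (0\<^sub>m a b)" "j < dim_col (0\<^sub>m a b)"
  hence i: "i < a" and j: "j < b" by simp_all
  have "(c \<cdot>\<^sub>m A) $$ (i,j) = c * A $$ (i,j)" using i j assms(3) by simp
  hence "c * A $$ (i,j) = 0" using assms(2) i j by simp
  thus "A $$ (i, j) = 0\<^sub>m a b $$ (i, j)" using assms(1) i j by simp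
next
  show "dim_row A = dim_row (0\<^sub>m a b)" using assms(3) by simp
  show "dim_col A = dim_col (0\<^sub>m a b)" using assms(3) by simp
qed

locale absP =
  fixes n :: nat and P Q G :: "complex mat"
  assumes Pc: "P \<in> carrier_mat n n" and Qc: "Q \<in> carrier_mat n n" and Gc: "G \<in> carrier_mat n n"
    and PP: "P * P = P" and PQ: "P * Q = Q" and QP: "Q * P = Q" and QG: "Q * G = P"
    and aP: "mat_adjoint P = P" and aQ: "mat_adjoint Q = Q"
begin

definition sq :: "complex mat \<Rightarrow> bool" where "sq A \<longleftrightarrow> A \<in> carrier_mat n n"

lemma sq_basic[simp]: "sq P" "sq Q" "sq G" "sq (1\<^sub>m n)" "sq (0\<^sub>m n n)"
  using Pc Qc Gc unfolding sq_def by simp_all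

lemma sq_ops[simp]: "sq A \<Longrightarrow> sq B \<Longrightarrow> sq (A * B)" "sq A \<Longrightarrow> sq B \<Longrightarrow> sq (A - B)"
  "sq A \<Longrightarrow> sq (mat_adjoint A)" "sq A \<Longrightarrow> sq (c \<cdot>\<^sub>m A)" "sq A \<Longrightarrow> sq (A ^\<^sub>m k)"
  unfolding sq_def by (auto intro: mult_carrier_mat minus_carrier_mat)

lemma sq_assoc[simp]: "sq A \<Longrightarrow> sq B \<Longrightarrow> sq C \<Longrightarrow> A * B * C = A * (B * C)"
  unfolding sq_def by (rule assoc_mult_mat)

lemma sq_zero[simp]: "sq A \<Longrightarrow> A * 0\<^sub>m n n = 0\<^sub>m n n" "sq A \<Longrightarrow> 0\<^sub>m n n * A = 0\<^sub>m n n"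
  unfolding sq_def by auto

lemma sq_one[simp]: "sq A \<Longrightarrow> A * 1\<^sub>m n = A" "sq A \<Longrightarrow> 1\<^sub>m n * A = A"
  unfolding sq_def by auto

lemma sq_minus_zero[simp]: "sq A \<Longrightarrow> A - 0\<^sub>m n n = A"
proof -
  assume "sq A" hence A: "A \<in> carrier_mat n n" unfolding sq_def .
  show ?thesis
  proof (rule eq_matI)
    fix i j assume "i < dim_row A" "j < dim_col A"
    thus "(A - 0\<^sub>m n n) $$ (i, j) = A $$ (i, j)" using A by simp
  qed (use A in simp_all)
qed

lemma sq_smult[simp]: "sq A \<Longrightarrow> sq B \<Longrightarrow> A * (c \<cdot>\<^sub>m B) = c \<cdot>\<^sub>m (A * B)"
  "sq A \<Longrightarrow> sq B \<Longrightarrow> (c \<cdot>\<^sub>m A) * B = c \<cdot>\<^sub>m (A * B)"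
  unfolding sq_def by (auto intro: mult_smult_distrib mult_smult_assoc_mat)

lemma sq_adj_mult: "sq A \<Longrightarrow> sq B \<Longrightarrow> mat_adjoint (A * B) = mat_adjoint B * mat_adjoint A"
  unfolding sq_def by (rule adj_mult)

lemma ctx: "A * B = C \<Longrightarrow> sq A \<Longrightarrow> sq B \<Longrightarrow> sq Z \<Longrightarrow> A * (B * Z) = C * Z"
  by (metis sq_assoc)

lemma PPz[simp]: "sq Z \<Longrightarrow> P * (P * Z) = P * Z" using ctx[OF PP] by simp
lemma PQz[simp]: "sq Z \<Longrightarrow> P * (Q * Z) = Q * Z" using ctx[OF PQ] by simp
lemma QPz[simp]: "sq Z \<Longrightarrow> Q * (P * Z) = Q * Z" using ctx[OF QP] by simp
lemmas base_eqs[simp] = PP PQ QP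

definition F where "F = 1\<^sub>m n - P"

lemma sqF[simp]: "sq F" unfolding F_def by simp

lemma FP[simp]: "F * P = 0\<^sub>m n n"
  unfolding F_def using minus_mult_distrib_mat[OF one_carrier_mat Pc Pc] Pc by simp
lemma PF[simp]: "P * F = 0\<^sub>m n n"
  unfolding F_def using mult_minus_distrib_mat[OF Pc one_carrier_mat Pc] Pc by simp
lemma FQ[simp]: "F * Q = 0\<^sub>m n n"
  unfolding F_def using minus_mult_distrib_mat[OF one_carrier_mat Pc Qc] Pc Qc by simp
lemma QF[simp]: "Q * F = 0\<^sub>m n n"
  unfolding F_def using mult_minus_distrib_mat[OF Qc one_carrier_mat Pc] Pc Qc by simp
lemma FF[simp]: "F * F = F"
proof -
  have "F * F = (1\<^sub>m n - P) * F" unfolding F_def by simp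
  also have "\<dots> = 1\<^sub>m n * F - P * F" using minus_mult_distrib_mat[OF one_carrier_mat Pc, of F n] sqF
    unfolding sq_def by simp
  finally show ?thesis using sqF by simp
qed
lemma aF: "mat_adjoint F = F" unfolding F_def using adj_minus[OF one_carrier_mat Pc] aP by simp

lemma FPz[simp]: "sq Z \<Longrightarrow> F * (P * Z) = 0\<^sub>m n n" using ctx[OF FP] by simp
lemma PFz[simp]: "sq Z \<Longrightarrow> P * (F * Z) = 0\<^sub>m n n" using ctx[OF PF] by simp
lemma FQz[simp]: "sq Z \<Longrightarrow> F * (Q * Z) = 0\<^sub>m n n" using ctx[OF FQ] by simp
lemma QFz[simp]: "sq Z \<Longrightarrow> Q * (F * Z) = 0\<^sub>m n n" using ctx[OF QF] by simp
lemma FFz[simp]: "sq Z \<Longrightarrow> F * (F * Z) = F * Z" using ctx[OF FF] by simp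

lemma key_Q: assumes "sq Y" "F * Y * Q = 0\<^sub>m n n" shows "F * Y * P = 0\<^sub>m n n"
proof -
  have "F * Y * P = F * Y * (Q * G)" using QG by simp
  also have "\<dots> = (F * Y * Q) * G" using assms(1) by simp
  also have "\<dots> = 0\<^sub>m n n * G" by (simp only: assms(2))
  finally show ?thesis using assms by simp
qed

lemma Qpow: "k > 0 \<Longrightarrow> \<exists>H. sq H \<and> Q ^\<^sub>m k * H = P"
proof (induction k)
  case 0 thus ?case by simp
next
  case (Suc k)
  show ?case
  proof (cases "k = 0")
    case True thus ?thesis using QG by (intro exI[of _ G]) simp
  next
    case False
    then obtain H where H: "sq H" "Q ^\<^sub>m k * H = P" using Suc by auto
    have "Q ^\<^sub>m Suc k * (G * H) = Q ^\<^sub>m k * (Q * G) * H" using H by simp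
    also have "\<dots> = Q ^\<^sub>m k * P * H" using QG by simp
    also have "Q ^\<^sub>m k * P = Q ^\<^sub>m k"
    proof -
      obtain j where j: "k = Suc j" using False by (cases k) auto
      have "Q ^\<^sub>m k * P = Q ^\<^sub>m j * (Q * P)" using j by simp
      thus ?thesis using j by simp
    qed
    finally show ?thesis using H by (intro exI[of _ "G * H"]) simp
  qed
qed

lemma FQpow[simp]: "l > 0 \<Longrightarrow> F * Q ^\<^sub>m l = 0\<^sub>m n n"
proof -
  assume "l > 0"
  then obtain j where j: "l = Suc j" by (cases l) auto
  have "Q ^\<^sub>m l = Q * Q ^\<^sub>m j" using j pow_commute[OF Qc, of j] by simp
  thus ?thesis by simp
qed

end


context absP begin

lemma FQpowz[simp]: "l > 0 \<Longrightarrow> sq Z \<Longrightarrow> F * (Q ^\<^sub>m l * Z) = 0\<^sub>m n n"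
  using ctx[OF FQpow] by simp

lemma sq_pow_commute: "sq A \<Longrightarrow> A * A ^\<^sub>m k = A ^\<^sub>m k * A"
  unfolding sq_def by (rule pow_commute)

lemma C1: assumes Y: "sq Y" and nm: "normal_mat (Y * Q)" shows "F * Y * P = 0\<^sub>m n n"
proof -
  define Z where "Z = F * (Y * Q)"
  have sZ: "sq Z" unfolding Z_def using Y by simp
  have aZ: "mat_adjoint Z = mat_adjoint (Y * Q) * F"
    unfolding Z_def using sq_adj_mult[of F "Y * Q"] Y aF by simp
  have nm': "(Y * Q) * mat_adjoint (Y * Q) = mat_adjoint (Y * Q) * (Y * Q)"
    using nm unfolding normal_mat_def .
  have "Z * mat_adjoint Z = F * ((Y * Q) * mat_adjoint (Y * Q)) * F"
    unfolding aZ unfolding Z_def using Y by simp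
  also have "\<dots> = F * (mat_adjoint (Y * Q) * (Y * Q)) * F" by (simp only: nm')
  also have "\<dots> = 0\<^sub>m n n" using Y by simp
  finally have "Z * mat_adjoint Z = 0\<^sub>m n n" .
  hence "Z = 0\<^sub>m n n" using mult_adj_zero[of Z n n] sZ unfolding sq_def by simp
  hence "F * Y * Q = 0\<^sub>m n n" unfolding Z_def using Y by simp
  thus ?thesis using key_Q Y by simp
qed

lemma C2: assumes Y: "sq Y" and c: "c \<noteq> 0" and k: "k > 0" and hk: "(Y * Q) ^\<^sub>m k = c \<cdot>\<^sub>m P"
  shows "F * Y * P = 0\<^sub>m n n"
proof -
  have sM: "sq (Y * Q)" using Y by simp
  have "c \<cdot>\<^sub>m (F * Y * Q) = F * (Y * Q) * (c \<cdot>\<^sub>m P)" using Y by simp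
  also have "\<dots> = F * (Y * Q) * (Y * Q) ^\<^sub>m k" by (simp only: hk)
  also have "\<dots> = F * ((Y * Q) * (Y * Q) ^\<^sub>m k)" using Y by simp
  also have "\<dots> = F * ((Y * Q) ^\<^sub>m k * (Y * Q))" by (simp only: sq_pow_commute[OF sM])
  also have "\<dots> = F * ((c \<cdot>\<^sub>m P) * (Y * Q))" by (simp only: hk)
  also have "\<dots> = 0\<^sub>m n n" using Y by simp
  finally have "F * Y * Q = 0\<^sub>m n n" using smult_zero_cancel[OF c, of "F * Y * Q" n n] Y
    unfolding sq_def[symmetric] by simp
  thus ?thesis using key_Q Y by simp
qed

lemma C3: assumes Y: "sq Y" and c: "c \<noteq> 0" and l: "l > 0" and hk: "(Y * Q) ^\<^sub>m k = c \<cdot>\<^sub>m Q ^\<^sub>m l"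
  shows "F * Y * P = 0\<^sub>m n n"
proof -
  obtain H where H: "sq H" "Q ^\<^sub>m l * H = P" using Qpow[OF l] by auto
  have sM: "sq (Y * Q)" using Y by simp
  have "c \<cdot>\<^sub>m (F * Y * Q) = c \<cdot>\<^sub>m (F * (Y * Q) * P)" using Y by simp
  also have "\<dots> = c \<cdot>\<^sub>m (F * (Y * Q) * (Q ^\<^sub>m l * H))" by (simp only: H(2))
  also have "\<dots> = F * (Y * Q) * ((c \<cdot>\<^sub>m Q ^\<^sub>m l) * H)" using Y H by simp
  also have "\<dots> = F * (Y * Q) * ((Y * Q) ^\<^sub>m k * H)" by (simp only: hk)
  also have "\<dots> = F * ((Y * Q) * (Y * Q) ^\<^sub>m k) * H" using Y H by simp
  also have "\<dots> = F * ((Y * Q) ^\<^sub>m k * (Y * Q)) * H" by (simp only: sq_pow_commute[OF sM])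
  also have "\<dots> = F * ((c \<cdot>\<^sub>m Q ^\<^sub>m l) * (Y * Q)) * H" by (simp only: hk)
  also have "\<dots> = 0\<^sub>m n n" using Y H l by simp
  finally have "F * Y * Q = 0\<^sub>m n n" using smult_zero_cancel[OF c, of "F * Y * Q" n n] Y
    unfolding sq_def[symmetric] by simp
  thus ?thesis using key_Q Y by simp
qed

lemma C4: assumes Y: "sq Y" and nm: "normal_mat (F * Y)" shows "F * Y * P = 0\<^sub>m n n"
proof -
  define Z where "Z = (F * Y) * P"
  have sZ: "sq Z" unfolding Z_def using Y by simp
  have aZ: "mat_adjoint Z = P * mat_adjoint (F * Y)"
    unfolding Z_def using sq_adj_mult[of "F * Y" P] Y aP by simp
  have nm': "(F * Y) * mat_adjoint (F * Y) = mat_adjoint (F * Y) * (F * Y)"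
    using nm unfolding normal_mat_def .
  have "mat_adjoint Z * Z = P * (mat_adjoint (F * Y) * (F * Y)) * P"
    unfolding aZ unfolding Z_def using Y by simp
  also have "\<dots> = P * ((F * Y) * mat_adjoint (F * Y)) * P" by (simp only: nm')
  also have "\<dots> = 0\<^sub>m n n" using Y by simp
  finally have "mat_adjoint Z * mat_adjoint (mat_adjoint Z) = 0\<^sub>m n n" by simp
  hence "mat_adjoint Z = 0\<^sub>m n n" using mult_adj_zero[of "mat_adjoint Z" n n] sZ unfolding sq_def by simp
  hence "mat_adjoint (mat_adjoint Z) = 0\<^sub>m n n" by simp
  thus ?thesis unfolding Z_def by simp
qed

lemma C5: assumes Y: "sq Y" and c: "c \<noteq> 0" and hk: "(F * Y) ^\<^sub>m k = c \<cdot>\<^sub>m F"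
  shows "F * Y * P = 0\<^sub>m n n"
proof -
  have sT: "sq (F * Y)" using Y by simp
  have "c \<cdot>\<^sub>m (F * Y * P) = (c \<cdot>\<^sub>m F) * (F * Y) * P" using Y by simp
  also have "\<dots> = (F * Y) ^\<^sub>m k * (F * Y) * P" by (simp only: hk)
  also have "\<dots> = ((F * Y) * (F * Y) ^\<^sub>m k) * P" by (simp only: sq_pow_commute[OF sT])
  also have "\<dots> = ((F * Y) * (c \<cdot>\<^sub>m F)) * P" by (simp only: hk)
  also have "\<dots> = 0\<^sub>m n n" using Y by simp
  finally show ?thesis using smult_zero_cancel[OF c, of "F * Y * P" n n] Y
    unfolding sq_def[symmetric] by simp
qed

lemma C7: assumes Y: "sq Y" and k: "k > 0" and hk: "F * Y * Q ^\<^sub>m k = 0\<^sub>m n n"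
  shows "F * Y * P = 0\<^sub>m n n"
proof -
  obtain H where H: "sq H" "Q ^\<^sub>m k * H = P" using Qpow[OF k] by auto
  have "F * Y * P = F * Y * (Q ^\<^sub>m k * H)" by (simp only: H(2))
  also have "\<dots> = (F * Y * Q ^\<^sub>m k) * H" using Y H by simp
  also have "\<dots> = 0\<^sub>m n n * H" by (simp only: hk)
  finally show ?thesis using H by simp
qed

end


lemma sandwich:
  assumes L: "(L::complex mat) \<in> carrier_mat p a" and A: "A \<in> carrier_mat a b" and W: "W \<in> carrier_mat b b"
    and B: "B \<in> carrier_mat b d" and R: "R \<in> carrier_mat q d" and WW: "mat_adjoint W * W = 1\<^sub>m b"
  shows "(L * A * mat_adjoint W) * (W * B * mat_adjoint R) = L * (A * B) * mat_adjoint R"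
proof -
  have aW: "mat_adjoint W \<in> carrier_mat b b" using W by simp
  have aR: "mat_adjoint R \<in> carrier_mat d q" using R by simp
  have LA: "L * A \<in> carrier_mat p b" using L A by simp
  have BR: "B * mat_adjoint R \<in> carrier_mat b q" using B aR by simp
  have WBR: "W * (B * mat_adjoint R) \<in> carrier_mat b q" using W BR by simp
  have "(L * A * mat_adjoint W) * (W * B * mat_adjoint R) = (L * A * mat_adjoint W) * (W * (B * mat_adjoint R))"
    using assoc_mult_mat[OF W B aR] by simp
  also have "\<dots> = (L * A) * (mat_adjoint W * (W * (B * mat_adjoint R)))"
    using assoc_mult_mat[OF LA aW WBR] .
  also have "mat_adjoint W * (W * (B * mat_adjoint R)) = (mat_adjoint W * W) * (B * mat_adjoint R)"
    using assoc_mult_mat[OF aW W BR] by simp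
  also have "\<dots> = B * mat_adjoint R" using WW left_mult_one_mat[OF BR] by simp
  also have "(L * A) * (B * mat_adjoint R) = L * (A * B) * mat_adjoint R"
    using assoc_mult_mat[OF L A B] assoc_mult_mat[OF LA B aR] assoc_mult_mat[OF L mult_carrier_mat[OF A B] aR]
    by simp
  finally show ?thesis .
qed

lemma adj_sandwich:
  assumes L: "(L::complex mat) \<in> carrier_mat p a" and A: "A \<in> carrier_mat a b" and R: "R \<in> carrier_mat q b"
  shows "mat_adjoint (L * A * mat_adjoint R) = R * mat_adjoint A * mat_adjoint L"
proof -
  have aR: "mat_adjoint R \<in> carrier_mat b q" using R by simp
  have "mat_adjoint (L * A * mat_adjoint R) = mat_adjoint (mat_adjoint R) * mat_adjoint (L * A)"
    using adj_mult[OF mult_carrier_mat[OF L A] aR] .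
  also have "mat_adjoint (L * A) = mat_adjoint A * mat_adjoint L" using adj_mult[OF L A] .
  finally show ?thesis using assoc_mult_mat[OF R adj_carrier[OF A] adj_carrier[OF L]] by simp
qed

lemma unsandwich:
  assumes V: "(V::complex mat) \<in> carrier_mat n n" and VV: "mat_adjoint V * V = 1\<^sub>m n" and Z: "Z \<in> carrier_mat n n"
  shows "mat_adjoint V * (V * Z * mat_adjoint V) * V = Z"
proof -
  have aV: "mat_adjoint V \<in> carrier_mat n n" using V by simp
  have VZ: "V * Z \<in> carrier_mat n n" using V Z by simp
  have "mat_adjoint V * (V * Z * mat_adjoint V) = (mat_adjoint V * (V * Z)) * mat_adjoint V"
    using assoc_mult_mat[OF aV VZ aV] by simp
  also have "mat_adjoint V * (V * Z) = (mat_adjoint V * V) * Z" using assoc_mult_mat[OF aV V Z] by simp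
  also have "\<dots> = Z" using VV Z by simp
  finally have "mat_adjoint V * (V * Z * mat_adjoint V) * V = Z * mat_adjoint V * V" by simp
  also have "\<dots> = Z * (mat_adjoint V * V)" using assoc_mult_mat[OF Z aV V] .
  finally show ?thesis using VV Z by simp
qed

lemma minus_zero_eq: assumes "(A::complex mat) \<in> carrier_mat a b" "B \<in> carrier_mat a b" "A - B = 0\<^sub>m a b"
  shows "A = B"
proof (rule eq_matI)
  fix i j assume ij: "i < dim_row B" "j < dim_col B"
  hence i: "i < a" and j: "j < b" using assms by auto
  have "(A - B) $$ (i,j) = A $$ (i,j) - B $$ (i,j)" using assms(1,2) i j by simp
  moreover have "(A - B) $$ (i,j) = 0" by (simp only: assms(3)) (simp add: i j)
  ultimately show "A $$ (i, j) = B $$ (i, j)" by simp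
qed (use assms in simp_all)



lemma carrier3: "(A::complex mat) \<in> carrier_mat a b \<Longrightarrow> B \<in> carrier_mat b c \<Longrightarrow> C \<in> carrier_mat d c
   \<Longrightarrow> A * B * mat_adjoint C \<in> carrier_mat a d"
  by (intro mult_carrier_mat adj_carrier)

theorem lemma2p3:
  fixes N U V Sigma Y :: "complex mat" and m n r :: nat
  assumes N_carrier: "N \<in> carrier_mat m n"
    and N_rank: "vec_space.rank m N = r"
    and Sigma_carrier: "Sigma \<in> carrier_mat r r"
    and Sigma_diag: "diagonal_mat Sigma"
    and Sigma_pos: "\<forall>i<r. Sigma $$ (i, i) \<in> \<real> \<and> Re (Sigma $$ (i, i)) > 0"
    and U_unitary: "unitary_mat U m"
    and V_unitary: "unitary_mat V n"
    and svd: "N = U * four_block_mat Sigma (0\<^sub>m r (n - r)) (0\<^sub>m (m - r) r) (0\<^sub>m (m - r) (n - r))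
                  * mat_adjoint V"
    and Y_carrier: "Y \<in> carrier_mat n n"
    and cond:
      "normal_mat (Y * mat_adjoint N * N)
       \<or> (\<exists>c k. c \<noteq> 0 \<and> k > 0 \<and> (Y * mat_adjoint N * N) ^\<^sub>m k = c \<cdot>\<^sub>m (mp_inv N * N))
       \<or> (\<exists>c l k. c \<noteq> 0 \<and> l > 0 \<and> k > 0 \<and>
            (Y * mat_adjoint N * N) ^\<^sub>m k = c \<cdot>\<^sub>m ((mat_adjoint N * N) ^\<^sub>m l))
       \<or> normal_mat (F_mat N * Y)
       \<or> (\<exists>c k. c \<noteq> 0 \<and> k > 0 \<and> (F_mat N * Y) ^\<^sub>m k = c \<cdot>\<^sub>m F_mat N)
       \<or> F_mat N * Y * mp_inv N * N = 0\<^sub>m n n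
       \<or> (\<exists>k>0. F_mat N * Y * (mat_adjoint N * N) ^\<^sub>m k = 0\<^sub>m n n)"
  shows "\<exists>Y1 Y3 Y4. Y1 \<in> carrier_mat r r \<and> Y3 \<in> carrier_mat r (n - r)
           \<and> Y4 \<in> carrier_mat (n - r) (n - r)
           \<and> Y = V * four_block_mat Y1 Y3 (0\<^sub>m (n - r) r) Y4 * mat_adjoint V"
proof -
  have rn: "r \<le> n" using vec_space.rank_le_nc[OF N_carrier] N_rank by simp
  have rm: "r \<le> m" using vec_space.rank_le_nr[OF N_carrier] N_rank by simp
  define s where "s = n - r"
  define t where "t = m - r"
  have ns: "n = r + s" and mt: "m = r + t" using rn rm unfolding s_def t_def by simp_all
  have U: "U \<in> carrier_mat m m" and UU: "mat_adjoint U * U = 1\<^sub>m m" and UU': "U * mat_adjoint U = 1\<^sub>m m"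
    using U_unitary unfolding unitary_mat_def by auto
  have V: "V \<in> carrier_mat n n" and VV: "mat_adjoint V * V = 1\<^sub>m n" and VV': "V * mat_adjoint V = 1\<^sub>m n"
    using V_unitary unfolding unitary_mat_def by auto
  define sg where "sg i = (if i < r then Sigma $$ (i,i) else 1)" for i
  have sg0: "sg i \<noteq> 0" for i using Sigma_pos unfolding sg_def by (cases "i < r") auto
  have Sd: "Sigma = mat_diag r sg"
  proof (rule eq_matI)
    fix i j assume ij: "i < dim_row (mat_diag r sg)" "j < dim_col (mat_diag r sg)"
    hence i: "i < r" and j: "j < r" by (simp_all add: mat_diag_def)
    show "Sigma $$ (i, j) = mat_diag r sg $$ (i, j)"
      using Sigma_diag Sigma_carrier i j unfolding mat_diag_def diagonal_mat_def sg_def by auto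
  qed (use Sigma_carrier in \<open>simp_all add: mat_diag_def\<close>)
  define Si where "Si = mat_diag r (\<lambda>i. 1 / sg i)"
  have Si: "Si \<in> carrier_mat r r" unfolding Si_def by simp
  have SSi: "Sigma * Si = 1\<^sub>m r" unfolding Sd Si_def using sg0 by simp
  have SiS: "Si * Sigma = 1\<^sub>m r" unfolding Sd Si_def using sg0 by simp
  have dS: "dim_row Sigma = r" "dim_col Sigma = r" using Sigma_carrier by auto
  have dSi: "dim_row Si = r" "dim_col Si = r" using Si by auto
  define Sb where "Sb = four_block_mat Sigma (0\<^sub>m r s) (0\<^sub>m t r) (0\<^sub>m t s)"
  define Xb where "Xb = four_block_mat Si (0\<^sub>m r t) (0\<^sub>m s r) (0\<^sub>m s t)"
  define Pm where "Pm = four_block_mat (1\<^sub>m r :: complex mat) (0\<^sub>m r t) (0\<^sub>m t r) (0\<^sub>m t t)"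
  define Pb where "Pb = four_block_mat (1\<^sub>m r :: complex mat) (0\<^sub>m r s) (0\<^sub>m s r) (0\<^sub>m s s)"
  define Qb where "Qb = four_block_mat (mat_adjoint Sigma * Sigma) (0\<^sub>m r s) (0\<^sub>m s r) (0\<^sub>m s s)"
  define Gb where "Gb = four_block_mat (Si * mat_adjoint Si) (0\<^sub>m r s) (0\<^sub>m s r) (0\<^sub>m s s)"
  have aS: "mat_adjoint Sigma \<in> carrier_mat r r" using Sigma_carrier by simp
  have aSi: "mat_adjoint Si \<in> carrier_mat r r" using Si by simp
  have SS: "mat_adjoint Sigma * Sigma \<in> carrier_mat r r" using mult_carrier_mat[OF aS Sigma_carrier] .
  have SiSi: "Si * mat_adjoint Si \<in> carrier_mat r r" using mult_carrier_mat[OF Si aSi] .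
  have dSS: "dim_row (mat_adjoint Sigma * Sigma) = r" "dim_col (mat_adjoint Sigma * Sigma) = r" using SS by auto
  have Sb: "Sb \<in> carrier_mat m n" unfolding Sb_def mt ns using Sigma_carrier by simp
  have Xb: "Xb \<in> carrier_mat n m" unfolding Xb_def mt ns using Si by simp
  have Pm: "Pm \<in> carrier_mat m m" unfolding Pm_def mt by simp
  have Pb: "Pb \<in> carrier_mat n n" unfolding Pb_def ns by simp
  have Qb: "Qb \<in> carrier_mat n n" unfolding Qb_def ns using SS by simp
  have Gb: "Gb \<in> carrier_mat n n" unfolding Gb_def ns using SiSi by simp
  have SbXb: "Sb * Xb = Pm" unfolding Sb_def Xb_def Pm_def
    by (subst mult_four_block_mat[OF Sigma_carrier _ _ _ Si], auto simp: SSi dS dSi)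
  have XbSb: "Xb * Sb = Pb" unfolding Sb_def Xb_def Pb_def
    by (subst mult_four_block_mat[OF Si _ _ _ Sigma_carrier], auto simp: SiS dS dSi)
  have PmSb: "Pm * Sb = Sb" unfolding Sb_def Pm_def
    by (subst mult_four_block_mat[OF one_carrier_mat _ _ _ Sigma_carrier], auto simp: dS)
  have PbXb: "Pb * Xb = Xb" unfolding Xb_def Pb_def
    by (subst mult_four_block_mat[OF one_carrier_mat _ _ _ Si], auto simp: dSi)
  have aPm: "mat_adjoint Pm = Pm" unfolding Pm_def
    by (subst adj_four_block[OF one_carrier_mat], auto)
  have aPb: "mat_adjoint Pb = Pb" unfolding Pb_def
    by (subst adj_four_block[OF one_carrier_mat], auto)
  have aSb: "mat_adjoint Sb = four_block_mat (mat_adjoint Sigma) (0\<^sub>m r t) (0\<^sub>m s r) (0\<^sub>m s t)"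
    unfolding Sb_def by (subst adj_four_block[OF Sigma_carrier], auto)
  have SbSb: "mat_adjoint Sb * Sb = Qb" unfolding aSb unfolding Sb_def Qb_def
    by (subst mult_four_block_mat[OF aS _ _ _ Sigma_carrier], auto simp: dS)
  have aQb: "mat_adjoint Qb = Qb" unfolding Qb_def
    by (subst adj_four_block[OF SS], auto simp: adj_mult[OF aS Sigma_carrier])
  have PbPb: "Pb * Pb = Pb" unfolding Pb_def
    by (subst mult_four_block_mat[OF one_carrier_mat _ _ _ one_carrier_mat], auto)
  have PbQb: "Pb * Qb = Qb" unfolding Pb_def Qb_def
    by (subst mult_four_block_mat[OF one_carrier_mat _ _ _ SS], auto simp: SS dSS left_mult_one_mat[OF SS] left_mult_zero_mat[OF SS])
  have QbPb: "Qb * Pb = Qb" unfolding Pb_def Qb_def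
    by (subst mult_four_block_mat[OF SS _ _ _ one_carrier_mat], auto simp: SS right_mult_one_mat[OF SS] right_mult_zero_mat[OF SS])
  have top: "mat_adjoint Sigma * Sigma * (Si * mat_adjoint Si) = 1\<^sub>m r"
  proof -
    have "mat_adjoint Sigma * Sigma * (Si * mat_adjoint Si) = mat_adjoint Sigma * ((Sigma * Si) * mat_adjoint Si)"
      using aS Sigma_carrier Si aSi by (simp add: assoc_mult_mat[OF aS Sigma_carrier SiSi] assoc_mult_mat[OF Sigma_carrier Si aSi])
    also have "\<dots> = mat_adjoint (Si * Sigma)" using SSi aS adj_mult[OF Si Sigma_carrier] left_mult_one_mat[OF aSi] by simp
    finally show ?thesis using SiS by simp
  qed
  have QbGb: "Qb * Gb = Pb" unfolding Gb_def Qb_def Pb_def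
    by (subst mult_four_block_mat[OF SS _ _ _ SiSi], auto simp: SS SiSi top right_mult_zero_mat[OF SS] left_mult_zero_mat[OF SiSi])
  have N: "N = U * Sb * mat_adjoint V" unfolding svd Sb_def s_def t_def ..
  define X where "X = V * Xb * mat_adjoint U"
  have Xc: "X \<in> carrier_mat n m" unfolding X_def using carrier3[OF V Xb U] .
  have NX: "N * X = U * Pm * mat_adjoint U" unfolding N X_def
    using sandwich[OF U Sb V Xb U VV] SbXb by simp
  have XN: "X * N = V * Pb * mat_adjoint V" unfolding N X_def
    using sandwich[OF V Xb U Sb V UU] XbSb by simp
  have pen: "penrose N X" unfolding penrose_def
  proof (intro conjI)
    show "X \<in> carrier_mat (dim_col N) (dim_row N)" using Xc N_carrier by simp
    show "N * X * N = N" unfolding NX unfolding N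
      using sandwich[OF U Pm U Sb V UU] PmSb by simp
    show "X * N * X = X" unfolding XN unfolding X_def
      using sandwich[OF V Pb V Xb U VV] PbXb by simp
    show "mat_adjoint (N * X) = N * X" unfolding NX
      using adj_sandwich[OF U Pm U] aPm by simp
    show "mat_adjoint (X * N) = X * N" unfolding XN
      using adj_sandwich[OF V Pb V] aPb by simp
  qed
  have mpN: "mp_inv N = X" unfolding mp_inv_def
  proof (rule the_equality)
    show "penrose N X" by (rule pen)
    fix Z assume "penrose N Z" thus "Z = X" using penrose_unique[OF N_carrier _ pen] by blast
  qed
  define P where "P = V * Pb * mat_adjoint V"
  define Q where "Q = V * Qb * mat_adjoint V"
  define G where "G = V * Gb * mat_adjoint V"
  have PN: "mp_inv N * N = P" unfolding mpN XN P_def ..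
  have aN: "mat_adjoint N = V * mat_adjoint Sb * mat_adjoint U"
    unfolding N using adj_sandwich[OF U Sb V] .
  have QN: "mat_adjoint N * N = Q" unfolding aN Q_def unfolding N
    using sandwich[OF V adj_carrier[OF Sb] U Sb V UU] SbSb by simp
  have Pc: "P \<in> carrier_mat n n" unfolding P_def using carrier3[OF V Pb V] .
  have Qc: "Q \<in> carrier_mat n n" unfolding Q_def using carrier3[OF V Qb V] .
  have Gc: "G \<in> carrier_mat n n" unfolding G_def using carrier3[OF V Gb V] .
  interpret absP n P Q G
  proof
    show "P \<in> carrier_mat n n" "Q \<in> carrier_mat n n" "G \<in> carrier_mat n n" by fact+
    show "P * P = P" unfolding P_def using sandwich[OF V Pb V Pb V VV] PbPb by simp
    show "P * Q = Q" unfolding P_def Q_def using sandwich[OF V Pb V Qb V VV] PbQb by simp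
    show "Q * P = Q" unfolding P_def Q_def using sandwich[OF V Qb V Pb V VV] QbPb by simp
    show "Q * G = P" unfolding P_def Q_def G_def using sandwich[OF V Qb V Gb V VV] QbGb by simp
    show "mat_adjoint P = P" unfolding P_def using adj_sandwich[OF V Pb V] aPb by simp
    show "mat_adjoint Q = Q" unfolding Q_def using adj_sandwich[OF V Qb V] aQb by simp
  qed
  have sqY: "sq Y" unfolding sq_def by (rule Y_carrier)
  have FN: "F_mat N = F" unfolding F_mat_def F_def PN using N_carrier by simp
  have YQ: "Y * mat_adjoint N * N = Y * Q"
    using assoc_mult_mat[OF Y_carrier adj_carrier[OF N_carrier] N_carrier] QN by simp
  have mpc: "mp_inv N \<in> carrier_mat n m" using mpN Xc by simp
  have FYP': "F * Y * mp_inv N * N = F * Y * P"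
    using assoc_mult_mat[OF mult_carrier_mat[OF sqF[unfolded sq_def] Y_carrier] mpc N_carrier] PN by simp
  have FYP: "F * Y * P = 0\<^sub>m n n"
    using cond unfolding YQ FN FYP' QN PN
  proof (elim disjE exE conjE)
    assume "normal_mat (Y * Q)" thus ?thesis using C1 sqY by blast
  next
    fix c k assume "c \<noteq> 0" "0 < k" "(Y * Q) ^\<^sub>m k = c \<cdot>\<^sub>m P" thus ?thesis using C2 sqY by blast
  next
    fix c l k assume "c \<noteq> 0" "0 < l" "0 < k" "(Y * Q) ^\<^sub>m k = c \<cdot>\<^sub>m Q ^\<^sub>m l" thus ?thesis using C3 sqY by blast
  next
    assume "normal_mat (F * Y)" thus ?thesis using C4 sqY by blast
  next
    fix c k assume "c \<noteq> 0" "0 < k" "(F * Y) ^\<^sub>m k = c \<cdot>\<^sub>m F" thus ?thesis using C5 sqY by blast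
  next
    assume "F * Y * P = 0\<^sub>m n n" thus ?thesis .
  next
    fix k assume "0 < k" "F * Y * Q ^\<^sub>m k = 0\<^sub>m n n" thus ?thesis using C7 sqY by blast
  qed
  have YPc: "Y * P \<in> carrier_mat n n" using Y_carrier Pc by simp
  have "F * Y * P = F * (Y * P)" using assoc_mult_mat[OF sqF[unfolded sq_def] Y_carrier Pc] .
  also have "\<dots> = 1\<^sub>m n * (Y * P) - P * (Y * P)" unfolding F_def
    using minus_mult_distrib_mat[OF one_carrier_mat Pc YPc] .
  also have "\<dots> = Y * P - P * (Y * P)" by (simp only: left_mult_one_mat[OF YPc])
  finally have "Y * P - P * (Y * P) = 0\<^sub>m n n" using FYP by simp
  hence YPP: "Y * P = P * (Y * P)" using minus_zero_eq[OF YPc mult_carrier_mat[OF Pc YPc]] by simp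
  define W where "W = mat_adjoint V * Y * V"
  have aV: "mat_adjoint V \<in> carrier_mat n n" using V by simp
  have Wc: "W \<in> carrier_mat n n" unfolding W_def using mult_carrier_mat[OF mult_carrier_mat[OF aV Y_carrier] V] .
  have YW: "Y = V * W * mat_adjoint V" unfolding W_def
    using unsandwich[OF aV _ Y_carrier] VV' by simp
  have WPb: "W * Pb \<in> carrier_mat n n" using mult_carrier_mat[OF Wc Pb] .
  have e1: "Y * P = V * (W * Pb) * mat_adjoint V" unfolding YW P_def
    using sandwich[OF V Wc V Pb V VV] .
  have e2': "P * (V * (W * Pb) * mat_adjoint V) = V * (Pb * (W * Pb)) * mat_adjoint V" unfolding P_def
    using sandwich[OF V Pb V WPb V VV] .
  have e2: "P * (Y * P) = V * (Pb * (W * Pb)) * mat_adjoint V" unfolding e1 by (rule e2')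
  have "V * (W * Pb) * mat_adjoint V = V * (Pb * (W * Pb)) * mat_adjoint V"
    using YPP unfolding e1 e2' .
  hence "mat_adjoint V * (V * (W * Pb) * mat_adjoint V) * V = mat_adjoint V * (V * (Pb * (W * Pb)) * mat_adjoint V) * V"
    by (rule arg_cong)
  hence WPbeq: "W * Pb = Pb * (W * Pb)"
    unfolding unsandwich[OF V VV WPb] unsandwich[OF V VV mult_carrier_mat[OF Pb WPb]] .
  obtain A B C E where sb: "split_block W r r = (A, B, C, E)" by (cases "split_block W r r") auto
  have dW: "dim_row W = r + s" "dim_col W = r + s" using Wc ns by auto
  note spl = split_block[OF sb dW]
  have A: "A \<in> carrier_mat r r" and B: "B \<in> carrier_mat r s" and C: "C \<in> carrier_mat s r"
    and E: "E \<in> carrier_mat s s" and Wfb: "W = four_block_mat A B C E" using spl by auto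
  have dA: "dim_row A = r" "dim_col A = r" using A by auto
  have dC: "dim_row C = s" "dim_col C = r" using C by auto
  have WPb2: "W * Pb = four_block_mat A (0\<^sub>m r s) C (0\<^sub>m s s)" unfolding Wfb Pb_def
    by (subst mult_four_block_mat[OF A B C E one_carrier_mat], auto simp: right_mult_one_mat[OF A]
      right_mult_one_mat[OF C] right_mult_zero_mat[OF B] right_mult_zero_mat[OF E]
      right_mult_zero_mat[OF A] right_mult_zero_mat[OF C] A C)
  have PbWPb: "Pb * (W * Pb) = four_block_mat A (0\<^sub>m r s) (0\<^sub>m s r) (0\<^sub>m s s)" unfolding WPb2
    by (unfold Pb_def, subst mult_four_block_mat[OF one_carrier_mat _ _ _ A], auto simp: left_mult_one_mat[OF A]
      left_mult_zero_mat[OF A] left_mult_zero_mat[OF C] A C)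
  have fbeq: "four_block_mat A (0\<^sub>m r s) C (0\<^sub>m s s) = four_block_mat A (0\<^sub>m r s) (0\<^sub>m s r) (0\<^sub>m s s)"
    using WPbeq PbWPb WPb2 by simp
  have C0: "C = 0\<^sub>m s r"
  proof (rule eq_matI)
    fix i j assume ij: "i < dim_row (0\<^sub>m s r)" "j < dim_col (0\<^sub>m s r)"
    hence i: "i < s" and j: "j < r" by simp_all
    have "four_block_mat A (0\<^sub>m r s) C (0\<^sub>m s s) $$ (r + i, j) = C $$ (i, j)"
      using i j dA by simp
    moreover have "four_block_mat A (0\<^sub>m r s) (0\<^sub>m s r) (0\<^sub>m s s) $$ (r + i, j) = 0"
      using i j dA by simp
    ultimately show "C $$ (i, j) = 0\<^sub>m s r $$ (i, j)" using fbeq i j by simp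
  qed (use dC in simp_all)
  show ?thesis
  proof (intro exI conjI)
    show "A \<in> carrier_mat r r" by fact
    show "B \<in> carrier_mat r (n - r)" using B unfolding s_def .
    show "E \<in> carrier_mat (n - r) (n - r)" using E unfolding s_def .
    show "Y = V * four_block_mat A B (0\<^sub>m (n - r) r) E * mat_adjoint V"
      using YW unfolding Wfb C0 s_def .
  qed
qed


end
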